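(* Let $k \in \mathbb{R}^n$ be a constant vector and consider the dynamics $\dot{x} = k$. Let $\mathcal{X}_0 \subseteq \mathbb{R}^n$ be a nonempty compact convex initial set and let $\mathcal{I} \subseteq \mathbb{R}^n$ be a closed convex location invariant with $\mathcal{X}_0 \cap \mathcal{I} \neq \emptyset$. For $s \ge 0$ let $\mathcal{R}(s) = \mathcal{X}_0 \oplus \{ks\} = \{x + ks \mid x \in \mathcal{X}_0\}$ be the set of states reachable at time $s$, and write $\mathcal{R}(s) \vdash \mathcal{I}$ if $\mathcal{R}(s) \cap \mathcal{I} \neq \emptyset$. Assume that $\mathcal{R}(s) \not\vdash \mathcal{I}$ for some $s \ge 0$, and let $t = \sup\{ s \ge 0 \mid \mathcal{R}(s) \vdash \mathcal{I}\}$ be the exact time at which the reachable states violate the invariant. Let $\delta_C > 0$ (coarse time step) and $\delta_F > 0$ (fine time step). Define the approximate crossing time $t'$ by the following coarse-then-fine search: let $i_C$ be the least positive integer with $\mathcal{R}(i_C \delta_C) \not\vdash \mathcal{I}$, put $t_1 = (i_C - 1)\delta_C$, let $i_F$ be the least nonnegative integer with $\mathcal{R}(t_1 + i_F \delta_F) \not\vdash \mathcal{I}$, and set $t' = t_1 + i_F \delta_F$. Then $|t - t'| \le \delta_F$.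
   Context: The Minkowski sum is $A \oplus B = \{a + b \mid a \in A, b \in B\}$. In the paper's setting the time step $\delta_C$ is $T/10$ and $\delta_F = \delta_C/10$ for a time horizon $T$, and the reachable sets are represented by their support functions $\sup_{\mathcal{X}}(\ell) = \sup\{\ell\cdot x \mid x \in \mathcal{X}\}$; these specific choices are not needed for the claim. *)

theory Defs
  imports "HOL-Analysis.Analysis"
begin

definition reach :: "'a::euclidean_space set \<Rightarrow> 'a \<Rightarrow> real \<Rightarrow> 'a set" where
  "reach X0 k s = {x + s *\<^sub>R k | x. x \<in> X0}"

definition sat_inv :: "'a set \<Rightarrow> 'a set \<Rightarrow> bool" where
  "sat_inv S I \<longleftrightarrow> S \<inter> I \<noteq> {}"

end

theory Submission
  imports Defs
begin

lemma sat_iff: "sat_inv (reach X0 k s) I \<longleftrightarrow> (\<exists>x\<in>X0. x + s *\<^sub>R k \<in> I)"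
  unfolding sat_inv_def reach_def by blast

lemma interval_lemma:
  fixes k :: "'a::euclidean_space"
  assumes "convex X0" "convex I"
    and a: "\<exists>x\<in>X0. x + a *\<^sub>R k \<in> I" and b: "\<exists>x\<in>X0. x + b *\<^sub>R k \<in> I"
    and "a \<le> s" "s \<le> b"
  shows "\<exists>x\<in>X0. x + s *\<^sub>R k \<in> I"
proof (cases "a = b")
  case True then show ?thesis using a assms by auto
next
  case False
  then have ab: "a < b" using assms by auto
  obtain x1 where x1: "x1 \<in> X0" "x1 + a *\<^sub>R k \<in> I" using a by blast
  obtain x2 where x2: "x2 \<in> X0" "x2 + b *\<^sub>R k \<in> I" using b by blast
  define v where "v = (s - a) / (b - a)"
  define u where "u = 1 - v"
  have ba: "b - a > 0" using ab by simp
  have v1: "v \<ge> 0" unfolding v_def using ba assms by simp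
  have v2: "v \<le> 1" unfolding v_def using ba assms by (simp add: divide_le_eq_1)
  have v: "v \<ge> 0" "u \<ge> 0" "u + v = 1" using v1 v2 unfolding u_def by auto
  have bv: "v * (b - a) = s - a" using ab unfolding v_def by simp
  have s: "s = u * a + v * b" unfolding u_def using bv by (simp add: algebra_simps)
  have "u *\<^sub>R x1 + v *\<^sub>R x2 \<in> X0" using assms(1) x1 x2 v unfolding convex_def by blast
  moreover have "u *\<^sub>R (x1 + a *\<^sub>R k) + v *\<^sub>R (x2 + b *\<^sub>R k) \<in> I"
    using assms(2) x1 x2 v unfolding convex_def by blast
  moreover have "u *\<^sub>R (x1 + a *\<^sub>R k) + v *\<^sub>R (x2 + b *\<^sub>R k) = (u *\<^sub>R x1 + v *\<^sub>R x2) + s *\<^sub>R k"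
    by (simp add: s algebra_simps)
  ultimately show ?thesis by auto
qed

theorem mainTheorem1:
  fixes k :: "'a::euclidean_space" and X0 I :: "'a set"
    and \<delta>C \<delta>F t t1 t' :: real and iC iF :: nat
  assumes X0: "X0 \<noteq> {}" "compact X0" "convex X0"
    and Inv: "closed I" "convex I"
    and meet: "X0 \<inter> I \<noteq> {}"
    and viol: "\<exists>s\<ge>0. \<not> sat_inv (reach X0 k s) I"
    and t_def: "t = Sup {s. s \<ge> 0 \<and> sat_inv (reach X0 k s) I}"
    and steps: "\<delta>C > 0" "\<delta>F > 0"
    and iC_def: "iC = (LEAST i::nat. i > 0 \<and> \<not> sat_inv (reach X0 k (real i * \<delta>C)) I)"
    and t1_def: "t1 = (real iC - 1) * \<delta>C"
    and iF_def: "iF = (LEAST i::nat. \<not> sat_inv (reach X0 k (t1 + real i * \<delta>F)) I)"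
    and t'_def: "t' = t1 + real iF * \<delta>F"
  shows "\<bar>t - t'\<bar> \<le> \<delta>F"
proof -
  define S where "S = {s. s \<ge> 0 \<and> sat_inv (reach X0 k s) I}"
  obtain s0 where s0: "s0 \<ge> 0" "\<not> sat_inv (reach X0 k s0) I" using viol by blast
  have P0: "\<exists>x\<in>X0. x + 0 *\<^sub>R k \<in> I" using meet by auto
  have S_eq: "S = {s. s \<ge> 0 \<and> (\<exists>x\<in>X0. x + s *\<^sub>R k \<in> I)}"
    unfolding S_def sat_iff ..
  have bnd: "s < s0" if "s \<in> S" for s
  proof (rule ccontr)
    assume "\<not> s < s0"
    then have "\<exists>x\<in>X0. x + s0 *\<^sub>R k \<in> I"
      using interval_lemma[OF X0(3) Inv(2) P0, of s s0] that s0 unfolding S_eq by auto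
    then show False using s0 sat_iff by blast
  qed
  define T where "T = ({0..s0} \<times> X0) \<inter> {p. snd p + fst p *\<^sub>R k \<in> I}"
  have "closed ((\<lambda>p::real\<times>'a. snd p + fst p *\<^sub>R k) -` I)"
    by (intro closed_vimage[OF Inv(1)] continuous_intros)
  then have "closed {p::real\<times>'a. snd p + fst p *\<^sub>R k \<in> I}" by (simp add: vimage_def)
  then have "compact T" unfolding T_def
    by (intro compact_Int_closed compact_Times X0(2)) auto
  moreover have "S = fst ` T"
  proof
    show "S \<subseteq> fst ` T"
    proof
      fix s assume sS: "s \<in> S"
      then obtain x where "x \<in> X0" "x + s *\<^sub>R k \<in> I" "s \<ge> 0" unfolding S_eq by auto
      moreover have "s \<le> s0" using bnd[OF sS] by simp
      ultimately have "(s, x) \<in> T" unfolding T_def by auto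
      then show "s \<in> fst ` T" by force
    qed
    show "fst ` T \<subseteq> S" unfolding T_def S_eq by force
  qed
  moreover have "compact (fst ` T)" using \<open>compact T\<close> by (intro compact_continuous_image continuous_intros)
  ultimately have "compact S" by simp
  then have clS: "closed S" and bdS: "bdd_above S" by (auto intro: compact_imp_closed compact_imp_bounded bounded_imp_bdd_above)
  have "0 \<in> S" unfolding S_eq using P0 by auto
  then have tS: "t \<in> S" using closed_contains_Sup[OF _ bdS clS] t_def S_def by blast
  have key: "sat_inv (reach X0 k s) I \<longleftrightarrow> s \<le> t" if "s \<ge> 0" for s
  proof
    assume "sat_inv (reach X0 k s) I"
    then have "s \<in> S" using that S_def by auto
    then show "s \<le> t" using cSup_upper[OF _ bdS] t_def S_def by auto
  next
    assume "s \<le> t"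
    then show "sat_inv (reach X0 k s) I"
      using interval_lemma[OF X0(3) Inv(2) P0, of t s] tS that unfolding S_eq sat_iff by auto
  qed
  have t0: "t \<ge> 0" using tS S_def by auto
  obtain n :: nat where n: "real n > t / \<delta>C" using reals_Archimedean2 by blast
  have nC: "real (Suc n) * \<delta>C > t"
  proof -
    have "t / \<delta>C < real (Suc n)" using n by simp
    then show ?thesis using steps(1) by (simp add: field_simps)
  qed
  have exC: "\<exists>i::nat. i > 0 \<and> \<not> sat_inv (reach X0 k (real i * \<delta>C)) I"
    using nC key[of "real (Suc n) * \<delta>C"] steps by (intro exI[of _ "Suc n"]) auto
  have iC: "iC > 0" "\<not> sat_inv (reach X0 k (real iC * \<delta>C)) I"
    using LeastI_ex[OF exC] iC_def by auto
  have iCt: "real iC * \<delta>C > t" using iC key[of "real iC * \<delta>C"] steps by auto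
  have t1t: "t1 \<le> t"
  proof (cases "iC = 1")
    case True then show ?thesis using t1_def t0 by simp
  next
    case False
    then have "iC - 1 > 0" using iC by auto
    moreover have "iC - 1 < iC" using iC by auto
    ultimately have "sat_inv (reach X0 k (real (iC - 1) * \<delta>C)) I"
      using not_less_Least[of "iC - 1" "\<lambda>i. i > 0 \<and> \<not> sat_inv (reach X0 k (real i * \<delta>C)) I"]
      iC_def by blast
    then have "real (iC - 1) * \<delta>C \<le> t" using key steps by auto
    then show ?thesis using t1_def iC by (simp add: of_nat_diff)
  qed
  have t1ge: "t1 \<ge> 0" using t1_def iC steps by auto
  have exF: "\<exists>i::nat. \<not> sat_inv (reach X0 k (t1 + real i * \<delta>F)) I"
  proof -
    obtain m :: nat where m: "real m > (t - t1) / \<delta>F" using reals_Archimedean2 by blast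
    then have "real m * \<delta>F > t - t1" using steps by (simp add: field_simps)
    then show ?thesis using key[of "t1 + real m * \<delta>F"] t1ge steps by (intro exI[of _ m]) auto
  qed
  have iF: "\<not> sat_inv (reach X0 k (t1 + real iF * \<delta>F)) I"
    using LeastI_ex[OF exF] iF_def by auto
  have t't: "t' > t" using iF key[of "t1 + real iF * \<delta>F"] t1ge steps t'_def by auto
  have "iF > 0" using t't t1t t'_def by (cases iF) auto
  then have "sat_inv (reach X0 k (t1 + real (iF - 1) * \<delta>F)) I"
    using not_less_Least[of "iF - 1" "\<lambda>i. \<not> sat_inv (reach X0 k (t1 + real i * \<delta>F)) I"]
      iF_def by auto
  then have "t1 + real (iF - 1) * \<delta>F \<le> t" using key t1ge steps by auto
  then have "t' - \<delta>F \<le> t" using \<open>iF > 0\<close> t'_def by (simp add: of_nat_diff algebra_simps)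
  then show ?thesis using t't by auto
qed

end
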